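(* Let $\phi:\mathbb{R}^n\to\mathbb{R}$ satisfy Assumption A, and let $\gamma,\nu$ satisfy $$0<\gamma<\frac{2}{2+L_\phi},\qquad 0<\nu<\big(4\gamma-2\gamma^2(2+L_\phi)\big)^{1/2}.$$ Then the discrete-time heavy-ball system with state $(u,w)\in\mathbb{R}^n\times\mathbb{R}^n$ and input $e\in\mathbb{R}^n$, $$u^+=u-\gamma(\nabla\phi(u)+e)+\nu(u-w),\qquad w^+=u,$$ is ISS with respect to $\mathcal{A}_d=\{(u^\star,u^\star)\}$.
   Context: Assumption A: $\phi$ is continuously differentiable and there exist $L_\phi>0$, $u^\star\in\mathbb{R}^n$ and class-$\mathcal{K}_\infty$ functions $\mu_1,\mu_2$ such that $\nabla\phi(u)=0$ iff $u=u^\star$, and for all $u,\tilde u\in\mathbb{R}^n$: $\mu_1(\|u-u^\star\|)\le\phi(u)-\phi(u^\star)$, $\mu_2(\phi(u)-\phi(u^\star))\le\|\nabla\phi(u)\|$, and $\|\nabla\phi(u)-\nabla\phi(\tilde u)\|\le L_\phi\|u-\tilde u\|$. ISS: the system $x^+=G_d(x,e)$ is ISS with respect to a compact set $\mathcal{A}_d$ if there exist $\beta\in\mathcal{KL}$, $\alpha\in\mathcal{K}_\infty$ such that for every bounded input sequence $e$ every solution satisfies $|x(j)|_{\mathcal{A}_d}\le\beta(|x(0)|_{\mathcal{A}_d},j)+\alpha(\sup_k\|e(k)\|)$ for all $j\in\mathbb{N}$. *)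

theory Defs
  imports "HOL-Analysis.Analysis"
begin

definition class_K :: "(real \<Rightarrow> real) \<Rightarrow> bool" where
  "class_K \<alpha> \<longleftrightarrow> continuous_on {0..} \<alpha> \<and> \<alpha> 0 = 0 \<and> strict_mono_on {0..} \<alpha>"

definition class_K_inf :: "(real \<Rightarrow> real) \<Rightarrow> bool" where
  "class_K_inf \<alpha> \<longleftrightarrow> class_K \<alpha> \<and> filterlim \<alpha> at_top at_top"

definition class_KL :: "(real \<Rightarrow> real \<Rightarrow> real) \<Rightarrow> bool" where
  "class_KL \<beta> \<longleftrightarrow>
     (\<forall>s\<ge>0. class_K (\<lambda>r. \<beta> r s)) \<and>
     (\<forall>r\<ge>0. antimono_on {0..} (\<lambda>s. \<beta> r s) \<and> ((\<lambda>s. \<beta> r s) \<longlongrightarrow> 0) at_top)"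

definition assumption_A ::
  "('a::euclidean_space \<Rightarrow> real) \<Rightarrow> ('a \<Rightarrow> 'a) \<Rightarrow> real \<Rightarrow> 'a \<Rightarrow> (real \<Rightarrow> real) \<Rightarrow> (real \<Rightarrow> real) \<Rightarrow> bool"
  where
  "assumption_A \<phi> g L u\<^sub>s \<mu>1 \<mu>2 \<longleftrightarrow>
     (\<forall>u. (\<phi> has_derivative (\<lambda>h. g u \<bullet> h)) (at u)) \<and> continuous_on UNIV g \<and>
     L > 0 \<and> class_K_inf \<mu>1 \<and> class_K_inf \<mu>2 \<and>
     (\<forall>u. g u = 0 \<longleftrightarrow> u = u\<^sub>s) \<and>
     (\<forall>u. \<mu>1 (norm (u - u\<^sub>s)) \<le> \<phi> u - \<phi> u\<^sub>s) \<and>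
     (\<forall>u. \<mu>2 (\<phi> u - \<phi> u\<^sub>s) \<le> norm (g u)) \<and>
     (\<forall>u v. norm (g u - g v) \<le> L * norm (u - v))"

definition ISS :: "('x::real_normed_vector \<Rightarrow> 'e::real_normed_vector \<Rightarrow> 'x) \<Rightarrow> 'x set \<Rightarrow> bool" where
  "ISS G A \<longleftrightarrow> compact A \<and>
     (\<exists>\<beta> \<alpha>. class_KL \<beta> \<and> class_K_inf \<alpha> \<and>
       (\<forall>(x::nat \<Rightarrow> 'x) (e::nat \<Rightarrow> 'e).
          bdd_above (range (\<lambda>k. norm (e k))) \<and> (\<forall>j. x (Suc j) = G (x j) (e j)) \<longrightarrow>
          (\<forall>j. infdist (x j) A \<le> \<beta> (infdist (x 0) A) (real j) + \<alpha> (SUP k. norm (e k)))))"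

definition heavy_ball :: "('a::real_normed_vector \<Rightarrow> 'a) \<Rightarrow> real \<Rightarrow> real \<Rightarrow> 'a \<times> 'a \<Rightarrow> 'a \<Rightarrow> 'a \<times> 'a" where
  "heavy_ball g \<gamma> \<nu> x e = (let u = fst x; w = snd x in
      (u - \<gamma> *\<^sub>R (g u + e) + \<nu> *\<^sub>R (u - w), u))"

end

theory Submission
  imports Defs
begin



lemma K_nonneg: "class_K f \<Longrightarrow> 0 \<le> x \<Longrightarrow> 0 \<le> f x"
  unfolding class_K_def
  by (metis atLeast_iff order.refl order_le_less strict_mono_onD)

lemma K_mono: "class_K f \<Longrightarrow> 0 \<le> x \<Longrightarrow> x \<le> y \<Longrightarrow> f x \<le> f y"
  unfolding class_K_def
  by (metis atLeast_iff order.trans order_le_less strict_mono_onD)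

lemma K_less: "class_K f \<Longrightarrow> 0 \<le> x \<Longrightarrow> x < y \<Longrightarrow> f x < f y"
  unfolding class_K_def
  by (meson atLeast_iff order.trans order_less_imp_le strict_mono_onD)

lemma K_less_iff: "class_K f \<Longrightarrow> 0 \<le> x \<Longrightarrow> 0 \<le> y \<Longrightarrow> f x < f y \<longleftrightarrow> x < y"
  by (metis K_less K_mono linorder_not_le)

lemma K_le_iff: "class_K f \<Longrightarrow> 0 \<le> x \<Longrightarrow> 0 \<le> y \<Longrightarrow> f x \<le> f y \<longleftrightarrow> x \<le> y"
  by (metis K_less K_mono linorder_not_le)

lemma K_comp:
  assumes "class_K f" "class_K g" shows "class_K (\<lambda>x. f (g x))"
proof -
  have img: "g ` {0..} \<subseteq> {0..}" using K_nonneg[OF assms(2)] by auto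
  have c: "continuous_on {0..} (\<lambda>x. f (g x))"
    using assms img unfolding class_K_def
    by (metis continuous_on_compose2)
  have s: "strict_mono_on {0..} (\<lambda>x. f (g x))"
    by (rule strict_mono_onI) (metis K_less K_nonneg assms atLeast_iff)
  show ?thesis using c s assms unfolding class_K_def by simp
qed

lemma K_add:
  assumes "class_K f" "class_K g" shows "class_K (\<lambda>x. f x + g x)"
proof -
  have c: "continuous_on {0..} (\<lambda>x. f x + g x)"
    using assms unfolding class_K_def by (intro continuous_intros) auto
  have s: "strict_mono_on {0..} (\<lambda>x. f x + g x)"
    by (rule strict_mono_onI) (metis K_less add_strict_mono assms atLeast_iff)
  show ?thesis using c s assms unfolding class_K_def by simp
qed

lemma K_scale: "0 < c \<Longrightarrow> class_K (\<lambda>x. c * x)"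
  unfolding class_K_def by (auto intro!: continuous_intros strict_mono_onI)

lemma K_sqrt: "class_K sqrt"
  unfolding class_K_def by (auto intro!: continuous_intros strict_mono_onI)

lemma K_sq: "0 < c \<Longrightarrow> class_K (\<lambda>x. c * x\<^sup>2)"
  unfolding class_K_def
  by (auto intro!: continuous_intros strict_mono_onI mult_strict_left_mono power_strict_mono)

lemma K_inf_plus_id:
  assumes "continuous_on {0..} h" "h 0 = 0" "\<And>x y. 0 \<le> x \<Longrightarrow> x \<le> y \<Longrightarrow> h x \<le> h y"
    "\<And>x. 0 \<le> x \<Longrightarrow> 0 \<le> h x"
  shows "class_K_inf (\<lambda>x. h x + x)"
proof -
  have "class_K (\<lambda>x. h x + x)"
    unfolding class_K_def using assms
    by (auto intro!: continuous_intros strict_mono_onI add_le_less_mono)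
  moreover have "filterlim (\<lambda>x. h x + x) at_top at_top"
  proof (rule filterlim_at_top_mono[OF filterlim_ident])
    show "\<forall>\<^sub>F x in at_top. x \<le> h x + x"
      using eventually_ge_at_top[of "0::real"] by eventually_elim (use assms in auto)
  qed
  ultimately show ?thesis unfolding class_K_inf_def by simp
qed



lemma K_inf_inverse:
  assumes f: "class_K_inf f"
  obtains h where "class_K h" "\<And>x. 0 \<le> x \<Longrightarrow> h (f x) = x" "\<And>y. 0 \<le> y \<Longrightarrow> f (h y) = y"
    "\<And>y. 0 \<le> y \<Longrightarrow> 0 \<le> h y"
proof -
  have K: "class_K f" using f unfolding class_K_inf_def by simp
  have cont: "continuous_on {0..} f" "f 0 = 0" using K unfolding class_K_def by auto
  have ex: "\<exists>x. 0 \<le> x \<and> f x = y" if y: "0 \<le> y" for y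
  proof -
    have "\<forall>\<^sub>F x in at_top. y \<le> f x"
      using f unfolding class_K_inf_def filterlim_at_top by auto
    moreover have "\<forall>\<^sub>F x in at_top. (0::real) \<le> x" by (rule eventually_ge_at_top)
    ultimately have "\<forall>\<^sub>F x in at_top. y \<le> f x \<and> 0 \<le> x" by eventually_elim auto
    then obtain b where b: "y \<le> f b" "0 \<le> b" unfolding eventually_at_top_linorder by blast
    have "continuous_on {0..b} f" using cont(1) by (rule continuous_on_subset) auto
    from IVT'[of f 0 y b, OF _ b(1) b(2) this] y cont(2) show ?thesis by auto
  qed
  define h where "h y = (THE x. 0 \<le> x \<and> f x = y)" for y
  have h: "0 \<le> h y \<and> f (h y) = y" if y0: "0 \<le> y" for y
  proof -
    obtain x where x: "0 \<le> x" "f x = y" using ex[OF y0] by blast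
    have "\<exists>!x. 0 \<le> x \<and> f x = y"
      using x by (metis K K_le_iff order_antisym order_refl)
    then show ?thesis unfolding h_def by (rule theI')
  qed
  have hf: "h (f x) = x" if "0 \<le> x" for x
    by (metis K K_le_iff K_nonneg h order_antisym order_refl that)
  have hmono: "h y < h y'" if "0 \<le> y" "y < y'" for y y'
    by (metis K K_less_iff h order_less_imp_le order_trans that linorder_not_le
        order_less_irrefl)
  have h0: "h 0 = 0" using hf[of 0] cont(2) by simp
  have hcont: "continuous_on {0..} h"
    unfolding continuous_on_iff
  proof (intro ballI allI impI)
    fix y0 :: real and e :: real
    assume y0: "y0 \<in> {0..}" and e: "0 < e"
    define x0 where "x0 = h y0"
    have x0: "0 \<le> x0" "f x0 = y0" using h y0 unfolding x0_def by auto
    have up: "y0 < f (x0 + e)" using K_less[OF K x0(1)] e x0 by simp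
    define d where "d = (if e \<le> x0 then min (f (x0 + e) - y0) (y0 - f (x0 - e)) else f (x0 + e) - y0)"
    have lo: "f (x0 - e) < y0" if "e \<le> x0"
      using K_less[OF K, of "x0 - e" x0] that e x0 by simp
    have d: "0 < d" using up lo unfolding d_def by auto
    show "\<exists>d>0. \<forall>y\<in>{0..}. dist y y0 < d \<longrightarrow> dist (h y) (h y0) < e"
    proof (intro exI conjI ballI impI)
      show "0 < d" by (rule d)
      fix y assume y: "y \<in> {0..}" and dy: "dist y y0 < d"
      have hy: "0 \<le> h y" "f (h y) = y" using h y by auto
      have "y < f (x0 + e)" using dy unfolding d_def dist_real_def by (auto split: if_splits)
      then have a: "h y < x0 + e"
        using hy K_less_iff[OF K, of "h y" "x0 + e"] x0 e by (metis K K_mono linorder_not_le add_nonneg_nonneg less_le_not_le order_less_imp_le)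
      have b: "x0 - e < h y"
      proof (cases "e \<le> x0")
        case True
        then have "f (x0 - e) < y" using dy unfolding d_def dist_real_def by (auto split: if_splits)
        then show ?thesis using hy True by (metis K K_mono diff_ge_0_iff_ge less_imp_le linorder_not_le)
      next
        case False then show ?thesis using hy by linarith
      qed
      show "dist (h y) (h y0) < e" using a b unfolding x0_def[symmetric] dist_real_def by auto
    qed
  qed
  have "class_K h" unfolding class_K_def
    using hcont h0 by (auto intro!: strict_mono_onI hmono)
  then show ?thesis using that hf h by blast
qed



lemma decay_fun:
  fixes a :: "real \<Rightarrow> real"
  assumes a0: "a 0 = 0" and anneg: "\<And>s. 0 \<le> s \<Longrightarrow> 0 \<le> a s"
    and amono: "\<And>s t. 0 \<le> s \<Longrightarrow> s \<le> t \<Longrightarrow> a s \<le> a t"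
    and apos: "\<And>s. 0 < s \<Longrightarrow> 0 < a s"
  obtains f where "class_K f" "\<And>t. 0 \<le> t \<Longrightarrow> t - a t / 2 \<le> f t"
    "\<And>t. 0 \<le> t \<Longrightarrow> f t \<le> t" "\<And>t. 0 < t \<Longrightarrow> f t < t"
proof -
  define b where "b t = Inf ((\<lambda>s. a s + \<bar>t - s\<bar>) ` {0..})" for t
  have bdd: "bdd_below ((\<lambda>s. a s + \<bar>t - s\<bar>) ` {0..})" for t
    by (rule bdd_belowI[of _ 0]) (auto intro: add_nonneg_nonneg anneg)
  have b_le: "b t \<le> a s + \<bar>t - s\<bar>" if "0 \<le> s" for s t
    unfolding b_def using that by (intro cInf_lower bdd) auto
  have b_ge: "c \<le> b t" if "\<And>s. 0 \<le> s \<Longrightarrow> c \<le> a s + \<bar>t - s\<bar>" for c t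
    unfolding b_def using that by (intro cInf_greatest) auto
  have b_nn: "0 \<le> b t" for t by (rule b_ge) (auto intro: add_nonneg_nonneg anneg)
  have b_lip: "b t - b t' \<le> \<bar>t - t'\<bar>" for t t'
  proof -
    have "b t - \<bar>t - t'\<bar> \<le> b t'"
    proof (rule b_ge)
      fix s :: real assume "0 \<le> s"
      then have "b t \<le> a s + \<bar>t - s\<bar>" by (rule b_le)
      then show "b t - \<bar>t - t'\<bar> \<le> a s + \<bar>t' - s\<bar>" by linarith
    qed
    then show ?thesis by linarith
  qed
  have b_a: "b t \<le> a t" if "0 \<le> t" for t using b_le[OF that, of t] by simp
  have b_t: "b t \<le> \<bar>t\<bar>" for t using b_le[of 0 t] a0 by simp
  have b_pos: "0 < b t" if "0 < t" for t
  proof -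
    have "min (a (t/2)) (t/2) \<le> b t"
    proof (rule b_ge)
      fix s :: real assume s: "0 \<le> s"
      show "min (a (t/2)) (t/2) \<le> a s + \<bar>t - s\<bar>"
      proof (cases "t/2 \<le> s")
        case True then have "a (t/2) \<le> a s" using that by (intro amono) auto
        moreover have "0 \<le> \<bar>t - s\<bar>" by simp
        ultimately show ?thesis by linarith
      next
        case False then show ?thesis using anneg[OF s] by linarith
      qed
    qed
    moreover have "0 < min (a (t/2)) (t/2)" using apos that by simp
    ultimately show ?thesis by linarith
  qed
  define f where "f t = t - b t / 2" for t
  have fcont: "continuous_on {0..} f"
    unfolding continuous_on_iff
  proof (intro ballI allI impI)
    fix x e :: real assume "0 < e"
    show "\<exists>d>0. \<forall>x'\<in>{0..}. dist x' x < d \<longrightarrow> dist (f x') (f x) < e"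
    proof (intro exI[of _ "e/2"] conjI ballI impI)
      fix x' assume "dist x' x < e/2"
      moreover have "b x' - b x \<le> \<bar>x' - x\<bar>" "b x - b x' \<le> \<bar>x - x'\<bar>" by (rule b_lip)+
      ultimately show "dist (f x') (f x) < e" unfolding f_def dist_real_def
        using abs_ge_self[of "x' - x"] abs_ge_minus_self[of "x' - x"]
        by (simp add: abs_minus_commute[of x x'] abs_less_iff)
    qed (use \<open>0 < e\<close> in auto)
  qed
  have fmono: "f s < f t" if "s < t" for s t
  proof -
    have "\<bar>t - s\<bar> = t - s" using that by simp
    then show ?thesis using b_lip[of t s] that unfolding f_def by linarith
  qed
  have f0: "f 0 = 0" using b_t[of 0] b_nn[of 0] unfolding f_def by simp
  have "class_K f" unfolding class_K_def using fcont f0 by (auto intro!: strict_mono_onI fmono)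
  moreover have "t - a t / 2 \<le> f t" if "0 \<le> t" for t using b_a[OF that] unfolding f_def by simp
  moreover have "f t \<le> t" for t using b_nn[of t] unfolding f_def by simp
  moreover have "f t < t" if "0 < t" for t using b_pos[OF that] unfolding f_def by simp
  ultimately show ?thesis using that by blast
qed

lemma iter_props:
  fixes f :: "real \<Rightarrow> real"
  assumes K: "class_K f" and le': "\<forall>t. 0 \<le> t \<longrightarrow> f t \<le> t" and lt': "\<forall>t. 0 < t \<longrightarrow> f t < t"
  shows "class_K (f ^^ n)"
    and "0 \<le> y \<Longrightarrow> m \<le> n \<Longrightarrow> (f ^^ n) y \<le> (f ^^ m) y"
    and "0 \<le> y \<Longrightarrow> (\<lambda>n. (f ^^ n) y) \<longlonglongrightarrow> 0"
proof -
  have le: "f t \<le> t" if "0 \<le> t" for t using le' that by blast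
  have lt: "f t < t" if "0 < t" for t using lt' that by blast
  show Kn: "class_K (f ^^ n)" for n
  proof (induction n)
    case 0 show ?case unfolding class_K_def by (simp add: continuous_on_id strict_mono_on_def)
  next
    case (Suc n)
    have "class_K (\<lambda>x. f ((f ^^ n) x))" by (rule K_comp[OF K Suc])
    then show ?case by (simp add: o_def)
  qed
  have dec1: "(f ^^ Suc n) y \<le> (f ^^ n) y" if "0 \<le> y" for y n
    using le[OF K_nonneg[OF Kn that]] by simp
  show decm: "(f ^^ n) y \<le> (f ^^ m) y" if "0 \<le> y" "m \<le> n" for y m n
    using that(2)
  proof (induction n rule: dec_induct)
    case base then show ?case by simp
  next
    case (step k) then show ?case using dec1[OF that(1), of k] by linarith
  qed
  assume y: "0 \<le> y"
  have ds: "decseq (\<lambda>n. (f ^^ n) y)" unfolding decseq_def using decm[OF y] by simp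
  have nn: "\<forall>i. 0 \<le> (f ^^ i) y" using K_nonneg[OF Kn y] by simp
  obtain l where l: "(\<lambda>n. (f ^^ n) y) \<longlonglongrightarrow> l" "\<forall>i. l \<le> (f ^^ i) y"
    by (rule decseq_convergent[OF ds nn])
  have l0: "0 \<le> l" by (rule LIMSEQ_le_const[OF l(1)]) (use nn in simp)
  have "(\<lambda>n. f ((f ^^ n) y)) \<longlonglongrightarrow> f l"
    apply (rule continuous_on_tendsto_compose[where s="{0..}", OF _ l(1)])
    using K l0 nn unfolding class_K_def by auto
  moreover have "(\<lambda>n. f ((f ^^ n) y)) \<longlonglongrightarrow> l"
    using LIMSEQ_Suc[OF l(1)] by simp
  ultimately have "f l = l" by (rule LIMSEQ_unique)
  then have "l = 0" using lt[of l] l0 by (cases "l = 0") auto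
  then show "(\<lambda>n. (f ^^ n) y) \<longlonglongrightarrow> 0" using l(1) by simp
qed



lemma descent:
  fixes \<phi> :: "'a::euclidean_space \<Rightarrow> real" and g :: "'a \<Rightarrow> 'a"
  assumes d: "\<And>u. (\<phi> has_derivative (\<lambda>h. g u \<bullet> h)) (at u)"
    and lip: "\<And>u v. norm (g u - g v) \<le> L * norm (u - v)"
  shows "\<phi> (u + D) \<le> \<phi> u + g u \<bullet> D + L/2 * (norm D)\<^sup>2"
proof -
  define F where "F t = \<phi> (u + t *\<^sub>R D) - t * (g u \<bullet> D) - L/2 * t\<^sup>2 * (norm D)\<^sup>2" for t
  have dF: "DERIV F t :> (g (u + t *\<^sub>R D) \<bullet> D - g u \<bullet> D - L * t * (norm D)\<^sup>2)" for t
  proof -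
    have lin: "((\<lambda>t. u + t *\<^sub>R D) has_derivative (\<lambda>h. h *\<^sub>R D)) (at t)"
      by (auto intro!: derivative_eq_intros)
    have "((\<lambda>t. \<phi> (u + t *\<^sub>R D)) has_derivative (\<lambda>h. g (u + t *\<^sub>R D) \<bullet> (h *\<^sub>R D))) (at t)"
      by (rule has_derivative_compose[OF lin d])
    moreover have "(\<lambda>h. g (u + t *\<^sub>R D) \<bullet> (h *\<^sub>R D)) = (\<lambda>h. (g (u + t *\<^sub>R D) \<bullet> D) * h)"
      by (auto simp: inner_scaleR_right)
    ultimately have "DERIV (\<lambda>t. \<phi> (u + t *\<^sub>R D)) t :> g (u + t *\<^sub>R D) \<bullet> D"
      unfolding has_field_derivative_def by simp
    then show ?thesis unfolding F_def
      by (auto intro!: derivative_eq_intros simp: power2_eq_square algebra_simps)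
  qed
  have le: "g (u + t *\<^sub>R D) \<bullet> D - g u \<bullet> D - L * t * (norm D)\<^sup>2 \<le> 0" if "0 \<le> t" for t
  proof -
    have "g (u + t *\<^sub>R D) \<bullet> D - g u \<bullet> D = (g (u + t *\<^sub>R D) - g u) \<bullet> D"
      by (simp add: inner_diff_left)
    also have "\<dots> \<le> norm (g (u + t *\<^sub>R D) - g u) * norm D"
      by (rule norm_cauchy_schwarz)
    also have "\<dots> \<le> (L * norm (t *\<^sub>R D)) * norm D"
      using lip[of "u + t *\<^sub>R D" u] by (intro mult_right_mono) auto
    also have "\<dots> = L * t * (norm D)\<^sup>2" using that by (simp add: power2_eq_square)
    finally show ?thesis by simp
  qed
  have "F 1 \<le> F 0"
  proof (rule DERIV_nonpos_imp_nonincreasing[of 0 1 F])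
    fix x :: real assume x: "0 \<le> x" "x \<le> 1"
    show "\<exists>y. DERIV F x :> y \<and> y \<le> 0" using dF[of x] le[OF x(1)] by blast
  qed simp
  then show ?thesis unfolding F_def by simp
qed



lemma quad_bound:
  fixes A B s X Y E t1 t2 t3 :: real
  assumes A: "A > 0" and B: "B > 0" and s: "s \<ge> 0" and disc: "s\<^sup>2 < 4*A*B"
    and X: "X \<ge> 0" and Y: "Y \<ge> 0" and E: "E \<ge> 0" and t1: "t1 \<ge> 0" and t2: "t2 \<ge> 0"
    and e0: "e0 = (4*A*B - s\<^sup>2)/(4*(A+B))"
  shows "-A*X\<^sup>2 + s*X*Y - B*Y\<^sup>2 + t1*X*E + t2*Y*E + t3*E\<^sup>2
          \<le> -(e0/2)*(X\<^sup>2+Y\<^sup>2) + ((t1\<^sup>2+t2\<^sup>2)/(2*e0) + t3)*E\<^sup>2"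
proof -
  have e0pos: "e0 > 0" using A B disc unfolding e0 by (intro divide_pos_pos) auto
  have e0A: "e0 < A"
  proof -
    have "4*A*B - s\<^sup>2 \<le> 4*A*B" by simp
    also have "\<dots> < A * (4*(A+B))" using A B by (simp add: algebra_simps power2_eq_square)
    finally show ?thesis unfolding e0 using A B by (simp add: divide_less_eq)
  qed
  define A' where "A' = A - e0"
  define B' where "B' = B - e0"
  have A'pos: "A' > 0" using e0A unfolding A'_def by simp
  have AB': "A' * B' = s\<^sup>2/4 + e0\<^sup>2"
  proof -
    have "e0 * (4*(A+B)) = 4*A*B - s\<^sup>2" unfolding e0 using A B by simp
    then show ?thesis unfolding A'_def B'_def by (simp add: algebra_simps power2_eq_square)
  qed
  have "A' * (A'*X\<^sup>2 - s*X*Y + B'*Y\<^sup>2) = (A'*X - s*Y/2)\<^sup>2 + (A'*B' - s\<^sup>2/4)*Y\<^sup>2"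
    by (simp add: algebra_simps power2_eq_square)
  also have "\<dots> \<ge> 0" using AB' by simp
  finally have "A'*X\<^sup>2 - s*X*Y + B'*Y\<^sup>2 \<ge> 0"
    using A'pos by (simp add: zero_le_mult_iff)
  then have h1: "-A*X\<^sup>2 + s*X*Y - B*Y\<^sup>2 \<le> -e0*(X\<^sup>2+Y\<^sup>2)"
    unfolding A'_def B'_def by (simp add: algebra_simps)
  have young: "t*Z*E \<le> (e0/2)*Z\<^sup>2 + t\<^sup>2/(2*e0)*E\<^sup>2" for t Z :: real
  proof -
    have "0 \<le> (e0*Z - t*E)\<^sup>2" by simp
    then have "2*e0*(t*Z*E) \<le> 2*e0*((e0/2)*Z\<^sup>2 + t\<^sup>2/(2*e0)*E\<^sup>2)"
      using e0pos by (simp add: algebra_simps power2_eq_square)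
    then show ?thesis using e0pos by simp
  qed
  have "t1*X*E \<le> (e0/2)*X\<^sup>2 + t1\<^sup>2/(2*e0)*E\<^sup>2" by (rule young)
  moreover have "t2*Y*E \<le> (e0/2)*Y\<^sup>2 + t2\<^sup>2/(2*e0)*E\<^sup>2" by (rule young)
  ultimately show ?thesis using h1 by (simp add: algebra_simps add_divide_distrib)
qed

lemma cs_bound: "a * (x \<bullet> y) \<le> \<bar>a\<bar> * (norm x * norm y)"
proof -
  have "a * (x \<bullet> y) \<le> \<bar>a * (x \<bullet> y)\<bar>" by simp
  also have "\<dots> = \<bar>a\<bar> * \<bar>x \<bullet> y\<bar>" by (simp add: abs_mult)
  also have "\<dots> \<le> \<bar>a\<bar> * (norm x * norm y)" by (intro mult_left_mono Cauchy_Schwarz_ineq2) auto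
  finally show ?thesis .
qed

lemma lyap_quad:
  fixes L \<gamma> \<nu> :: real
  assumes L: "0 < L" and g0: "0 < \<gamma>" and g1: "\<gamma> < 2 / (2 + L)"
    and n0: "0 < \<nu>" and n1: "\<nu> < sqrt (4 * \<gamma> - 2 * \<gamma>\<^sup>2 * (2 + L))"
    and c_def: "c = (1 - \<gamma>)/\<gamma> - L/2"
  obtains \<epsilon> C where "\<epsilon> > 0" "C \<ge> 0" "c > 0"
    "\<And>(g::'a::real_inner) d e. g \<bullet> (\<nu> *\<^sub>R d - \<gamma> *\<^sub>R (g + e)) + (L/2 + c) * (norm (\<nu> *\<^sub>R d - \<gamma> *\<^sub>R (g + e)))\<^sup>2
        - c * (norm d)\<^sup>2 \<le> - \<epsilon> * ((norm g)\<^sup>2 + (norm d)\<^sup>2) + C * (norm e)\<^sup>2"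
proof -
  define k where "k = (1 - \<gamma>)/\<gamma>"
  have kg: "k * \<gamma> = 1 - \<gamma>" unfolding k_def using g0 by simp
  have ck: "L/2 + c = k" unfolding c_def k_def by simp
  have gL: "\<gamma> * (2 + L) < 2" using g1 L by (simp add: less_divide_eq)
  have glt1: "\<gamma> < 1"
  proof -
    have "\<gamma> * (2 + L) = 2*\<gamma> + \<gamma>*L" by (simp add: algebra_simps)
    moreover have "\<gamma>*L > 0" using g0 L by simp
    ultimately show ?thesis using gL by linarith
  qed
  have cpos: "c > 0"
  proof -
    have "c = (2 - \<gamma> * (2 + L)) / (2*\<gamma>)" unfolding c_def using g0 by (simp add: field_simps)
    then show ?thesis using gL g0 by simp
  qed
  have nsq: "\<nu>\<^sup>2 < 4 * \<gamma> - 2 * \<gamma>\<^sup>2 * (2 + L)"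
  proof -
    have pos: "0 < sqrt (4 * \<gamma> - 2 * \<gamma>\<^sup>2 * (2 + L))" using n0 n1 by linarith
    then have "0 < 4 * \<gamma> - 2 * \<gamma>\<^sup>2 * (2 + L)" by simp
    moreover have "\<nu>\<^sup>2 < (sqrt (4 * \<gamma> - 2 * \<gamma>\<^sup>2 * (2 + L)))\<^sup>2"
      using n0 n1 by (intro power_strict_mono) auto
    ultimately show ?thesis by simp
  qed
  define A where "A = \<gamma>\<^sup>2"
  define B where "B = c - k * \<nu>\<^sup>2"
  define s where "s = \<bar>\<nu> * (2*\<gamma> - 1)\<bar>"
  define t1 where "t1 = \<bar>\<gamma> - 2*\<gamma>\<^sup>2\<bar>"
  define t2 where "t2 = 2 * \<nu> * (1 - \<gamma>)"
  define t3 where "t3 = \<gamma> * (1 - \<gamma>)"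
  define e0 where "e0 = (4*A*B - s\<^sup>2)/(4*(A+B))"
  have Apos: "A > 0" unfolding A_def using g0 by simp
  have key: "4*A*B - s\<^sup>2 = 4*\<gamma> - 4*\<gamma>\<^sup>2 - 2*\<gamma>\<^sup>2*L - \<nu>\<^sup>2"
  proof -
    have "4*A*B = 4*\<gamma>*(k*\<gamma>) - 2*\<gamma>\<^sup>2*L - 4*\<gamma>*(k*\<gamma>)*\<nu>\<^sup>2"
      unfolding A_def B_def c_def k_def[symmetric] by (simp add: algebra_simps power2_eq_square)
    also have "\<dots> = 4*\<gamma>*(1-\<gamma>) - 2*\<gamma>\<^sup>2*L - 4*\<gamma>*(1-\<gamma>)*\<nu>\<^sup>2" by (simp add: kg)
    finally show ?thesis unfolding s_def by (simp add: power_mult_distrib algebra_simps power2_eq_square)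
  qed
  have disc: "s\<^sup>2 < 4*A*B" using key nsq by (simp add: algebra_simps)
  have Bpos: "B > 0"
  proof -
    have "0 < 4*A*B" using disc zero_le_power2[of s] by linarith
    then show ?thesis using Apos by (simp add: zero_less_mult_iff)
  qed
  have e0pos: "e0 > 0" unfolding e0_def using disc Apos Bpos by (intro divide_pos_pos) auto
  define C where "C = (t1\<^sup>2+t2\<^sup>2)/(2*e0) + t3"
  have Cnn: "C \<ge> 0" unfolding C_def t3_def using e0pos g0 glt1 by (intro add_nonneg_nonneg) auto
  have main: "g \<bullet> (\<nu> *\<^sub>R d - \<gamma> *\<^sub>R (g + e)) + (L/2 + c) * (norm (\<nu> *\<^sub>R d - \<gamma> *\<^sub>R (g + e)))\<^sup>2
        - c * (norm d)\<^sup>2 \<le> - (e0/2) * ((norm g)\<^sup>2 + (norm d)\<^sup>2) + C * (norm e)\<^sup>2" for g d e :: 'a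
  proof -
    have nD: "(norm (\<nu> *\<^sub>R d - \<gamma> *\<^sub>R (g + e)))\<^sup>2
       = \<gamma>\<^sup>2 * (g \<bullet> g) + 2*\<gamma>\<^sup>2 * (g \<bullet> e) + \<gamma>\<^sup>2 * (e \<bullet> e) - 2*\<gamma>*\<nu>*(g \<bullet> d) - 2*\<gamma>*\<nu>*(e \<bullet> d) + \<nu>\<^sup>2 * (d \<bullet> d)"
      unfolding power2_norm_eq_inner
      by (simp add: inner_diff_left inner_diff_right inner_add_left inner_add_right
          inner_commute algebra_simps power2_eq_square)
    have gD: "g \<bullet> (\<nu> *\<^sub>R d - \<gamma> *\<^sub>R (g + e)) = \<nu> * (g \<bullet> d) - \<gamma> * (g \<bullet> g) - \<gamma> * (g \<bullet> e)"
      by (simp add: inner_diff_right inner_add_right algebra_simps)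
    have "g \<bullet> (\<nu> *\<^sub>R d - \<gamma> *\<^sub>R (g + e)) + (L/2 + c) * (norm (\<nu> *\<^sub>R d - \<gamma> *\<^sub>R (g + e)))\<^sup>2
        - c * (norm d)\<^sup>2
        = -A * (norm g)\<^sup>2 + (\<nu> * (2*\<gamma> - 1)) * (g \<bullet> d) - B * (norm d)\<^sup>2
          + (\<gamma> - 2*\<gamma>\<^sup>2) * (g \<bullet> e) + (- 2 * \<nu> * (1 - \<gamma>)) * (e \<bullet> d) + t3 * (norm e)\<^sup>2"
    proof -
      have "g \<bullet> (\<nu> *\<^sub>R d - \<gamma> *\<^sub>R (g + e)) + (L/2 + c) * (norm (\<nu> *\<^sub>R d - \<gamma> *\<^sub>R (g + e)))\<^sup>2
        - c * (norm d)\<^sup>2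
        = (-\<gamma> + (k*\<gamma>)*\<gamma>) * (g \<bullet> g) + (\<nu> - 2*(k*\<gamma>)*\<nu>) * (g \<bullet> d) - (c - k*\<nu>\<^sup>2) * (d \<bullet> d)
          + (-\<gamma> + 2*(k*\<gamma>)*\<gamma>) * (g \<bullet> e) + (- 2 * (k*\<gamma>) * \<nu>) * (e \<bullet> d) + (k*\<gamma>)*\<gamma> * (e \<bullet> e)"
        unfolding nD gD ck power2_norm_eq_inner by (simp add: algebra_simps power2_eq_square inner_commute)
      also have "\<dots> = -A * (norm g)\<^sup>2 + (\<nu> * (2*\<gamma> - 1)) * (g \<bullet> d) - B * (norm d)\<^sup>2
          + (\<gamma> - 2*\<gamma>\<^sup>2) * (g \<bullet> e) + (- 2 * \<nu> * (1 - \<gamma>)) * (e \<bullet> d) + t3 * (norm e)\<^sup>2"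
        unfolding kg A_def B_def t3_def power2_norm_eq_inner by (simp add: algebra_simps power2_eq_square inner_commute)
      finally show ?thesis .
    qed
    also have "\<dots> \<le> -A * (norm g)\<^sup>2 + s * norm g * norm d - B * (norm d)\<^sup>2
          + t1 * norm g * norm e + t2 * norm d * norm e + t3 * (norm e)\<^sup>2"
    proof -
      have "(\<nu> * (2*\<gamma> - 1)) * (g \<bullet> d) \<le> s * (norm g * norm d)" unfolding s_def by (rule cs_bound)
      moreover have "(\<gamma> - 2*\<gamma>\<^sup>2) * (g \<bullet> e) \<le> t1 * (norm g * norm e)" unfolding t1_def by (rule cs_bound)
      moreover have "(- 2 * \<nu> * (1 - \<gamma>)) * (e \<bullet> d) \<le> t2 * (norm d * norm e)"
      proof -
        have "(- 2 * \<nu> * (1 - \<gamma>)) * (e \<bullet> d) \<le> \<bar>- 2 * \<nu> * (1 - \<gamma>)\<bar> * (norm e * norm d)" by (rule cs_bound)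
        also have "\<bar>- 2 * \<nu> * (1 - \<gamma>)\<bar> = t2" unfolding t2_def using n0 glt1 by (simp add: abs_mult)
        finally show ?thesis by (simp add: mult.commute)
      qed
      ultimately show ?thesis by (simp add: algebra_simps)
    qed
    also have "\<dots> \<le> - (e0/2) * ((norm g)\<^sup>2 + (norm d)\<^sup>2) + C * (norm e)\<^sup>2"
      unfolding C_def
      by (rule quad_bound[OF Apos Bpos _ disc _ _ _ _ _ e0_def])
         (auto simp: s_def t1_def t2_def intro!: mult_nonneg_nonneg, use n0 glt1 in auto)
    finally show ?thesis .
  qed
  show ?thesis
    by (rule that[of "e0/2" C]) (use e0pos Cnn cpos main in auto)
qed


theorem proposition3:
  fixes \<phi> :: "'a::euclidean_space \<Rightarrow> real" and g :: "'a \<Rightarrow> 'a"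
    and L \<gamma> \<nu> :: real and u\<^sub>s :: 'a and \<mu>1 \<mu>2 :: "real \<Rightarrow> real"
  assumes "assumption_A \<phi> g L u\<^sub>s \<mu>1 \<mu>2"
    and "0 < \<gamma>" and "\<gamma> < 2 / (2 + L)"
    and "0 < \<nu>" and "\<nu> < sqrt (4 * \<gamma> - 2 * \<gamma>\<^sup>2 * (2 + L))"
  shows "ISS (heavy_ball g \<gamma> \<nu>) {(u\<^sub>s, u\<^sub>s)}"
proof -
  note A = assms(1)[unfolded assumption_A_def]
  have hd: "\<And>u. (\<phi> has_derivative (\<lambda>h. g u \<bullet> h)) (at u)" using A by blast
  have Lpos: "0 < L" using A by blast
  have m1: "class_K_inf \<mu>1" and m2: "class_K_inf \<mu>2" using A by blast+
  have m1K: "class_K \<mu>1" and m2K: "class_K \<mu>2" using m1 m2 unfolding class_K_inf_def by blast+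
  have gz: "g u\<^sub>s = 0" using A by blast
  have mu1b: "\<And>u. \<mu>1 (norm (u - u\<^sub>s)) \<le> \<phi> u - \<phi> u\<^sub>s" using A by blast
  have mu2b: "\<And>u. \<mu>2 (\<phi> u - \<phi> u\<^sub>s) \<le> norm (g u)" using A by blast
  have lip: "\<And>u v. norm (g u - g v) \<le> L * norm (u - v)" using A by blast
  define c where "c = (1 - \<gamma>)/\<gamma> - L/2"
  obtain \<epsilon> C where eps: "\<epsilon> > 0" and Cnn: "C \<ge> 0" and cpos: "c > 0"
    and quad: "\<And>(gg::'a) d e. gg \<bullet> (\<nu> *\<^sub>R d - \<gamma> *\<^sub>R (gg + e)) + (L/2 + c) * (norm (\<nu> *\<^sub>R d - \<gamma> *\<^sub>R (gg + e)))\<^sup>2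
        - c * (norm d)\<^sup>2 \<le> - \<epsilon> * ((norm gg)\<^sup>2 + (norm d)\<^sup>2) + C * (norm e)\<^sup>2"
    using lyap_quad[where 'a='a, OF Lpos assms(2-5) c_def] by blast
  obtain h1 where h1K: "class_K h1" and h1f: "\<And>x. 0 \<le> x \<Longrightarrow> h1 (\<mu>1 x) = x"
    and "\<And>y. 0 \<le> y \<Longrightarrow> \<mu>1 (h1 y) = y" and "\<And>y. 0 \<le> y \<Longrightarrow> 0 \<le> h1 y"
    using K_inf_inverse[OF m1] by blast
  obtain h2 where h2K: "class_K h2" and "\<And>x. 0 \<le> x \<Longrightarrow> h2 (\<mu>2 x) = x"
    and h2f: "\<And>y. 0 \<le> y \<Longrightarrow> \<mu>2 (h2 y) = y" and "\<And>y. 0 \<le> y \<Longrightarrow> 0 \<le> h2 y"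
    using K_inf_inverse[OF m2] by blast
  define p where "p u = \<phi> u - \<phi> u\<^sub>s" for u
  define V where "V x = p (fst x) + c * (norm (fst x - snd x))\<^sup>2" for x :: "'a \<times> 'a"
  have p_low: "\<mu>1 (norm (u - u\<^sub>s)) \<le> p u" for u unfolding p_def by (rule mu1b)
  have p_nn: "0 \<le> p u" for u using p_low[of u] K_nonneg[OF m1K, of "norm (u - u\<^sub>s)"] by simp
  have p_up: "p u \<le> L/2 * (norm (u - u\<^sub>s))\<^sup>2" for u
    using descent[OF hd lip, of u\<^sub>s "u - u\<^sub>s"] gz unfolding p_def by simp
  have V_nn: "0 \<le> V x" for x unfolding V_def using p_nn cpos by simp
  have Vstep: "V (heavy_ball g \<gamma> \<nu> x e) \<le> V x - \<epsilon> * ((norm (g (fst x)))\<^sup>2 + (norm (fst x - snd x))\<^sup>2) + C * (norm e)\<^sup>2"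
    for x e
  proof -
    obtain u w where x: "x = (u, w)" by (cases x)
    define D where "D = \<nu> *\<^sub>R (u - w) - \<gamma> *\<^sub>R (g u + e)"
    have hb: "heavy_ball g \<gamma> \<nu> x e = (u + D, u)"
      unfolding heavy_ball_def x D_def by (simp add: algebra_simps)
    have "V (heavy_ball g \<gamma> \<nu> x e) = p (u + D) + c * (norm D)\<^sup>2"
      unfolding hb V_def by simp
    also have "\<dots> \<le> p u + g u \<bullet> D + L/2 * (norm D)\<^sup>2 + c * (norm D)\<^sup>2"
      using descent[OF hd lip, of u D] unfolding p_def by simp
    also have "\<dots> = p u + c * (norm (u - w))\<^sup>2 + (g u \<bullet> D + (L/2 + c) * (norm D)\<^sup>2 - c * (norm (u - w))\<^sup>2)"
      by (simp add: algebra_simps)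
    also have "\<dots> \<le> p u + c * (norm (u - w))\<^sup>2 + (- \<epsilon> * ((norm (g u))\<^sup>2 + (norm (u - w))\<^sup>2) + C * (norm e)\<^sup>2)"
      using quad[of "g u" "u - w" e] unfolding D_def by linarith
    finally show ?thesis unfolding x V_def by simp
  qed
  define \<kappa>1 where "\<kappa>1 v = 2 * h1 v + sqrt ((1/c) * v)" for v
  define \<kappa>2 where "\<kappa>2 r = (L/2 + 4*c) * r\<^sup>2" for r
  have k1K: "class_K \<kappa>1" unfolding \<kappa>1_def
    by (rule K_add[OF K_comp[OF K_scale h1K] K_comp[OF K_sqrt K_scale]]) (use cpos in auto)
  have k2K: "class_K \<kappa>2" unfolding \<kappa>2_def by (rule K_sq) (use cpos Lpos in auto)
  have dist_eq: "infdist x {(u\<^sub>s, u\<^sub>s)} = norm (fst x - u\<^sub>s, snd x - u\<^sub>s)" for x :: "'a \<times> 'a"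
    by (cases x) (simp add: dist_norm)
  have Vlow: "infdist x {(u\<^sub>s, u\<^sub>s)} \<le> \<kappa>1 (V x)" for x
  proof -
    obtain u w where x: "x = (u, w)" by (cases x)
    have a: "norm (u - u\<^sub>s) \<le> h1 (V x)"
    proof -
      have "0 \<le> c * (norm (u - w))\<^sup>2" using cpos by simp
      then have "\<mu>1 (norm (u - u\<^sub>s)) \<le> V x" using p_low[of u] unfolding V_def x by simp
      then have "h1 (\<mu>1 (norm (u - u\<^sub>s))) \<le> h1 (V x)"
        using K_mono[OF h1K] K_nonneg[OF m1K] by simp
      then show ?thesis using h1f by simp
    qed
    have b: "norm (u - w) \<le> sqrt ((1/c) * V x)"
    proof -
      have "c * (norm (u - w))\<^sup>2 \<le> V x" using p_nn[of u] unfolding V_def x by simp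
      then have "(norm (u - w))\<^sup>2 \<le> (1/c) * V x" using cpos by (simp add: field_simps)
      then show ?thesis by (simp add: real_le_rsqrt)
    qed
    have "infdist x {(u\<^sub>s, u\<^sub>s)} \<le> norm (u - u\<^sub>s) + norm (w - u\<^sub>s)"
      unfolding dist_eq x by (simp add: norm_Pair_le)
    also have "norm (w - u\<^sub>s) \<le> norm (u - u\<^sub>s) + norm (u - w)"
      using norm_triangle_ineq[of "u - u\<^sub>s" "w - u"] by (simp add: norm_minus_commute[of u w])
    finally show ?thesis unfolding \<kappa>1_def using a b by simp
  qed
  have Vup: "V x \<le> \<kappa>2 (infdist x {(u\<^sub>s, u\<^sub>s)})" for x
  proof -
    obtain u w where x: "x = (u, w)" by (cases x)
    define r where "r = infdist x {(u\<^sub>s, u\<^sub>s)}"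
    have r1: "norm (u - u\<^sub>s) \<le> r" unfolding r_def dist_eq x using norm_fst_le by simp
    have r2: "norm (w - u\<^sub>s) \<le> r" unfolding r_def dist_eq x using norm_snd_le by simp
    have r3: "norm (u - w) \<le> 2 * r"
      using norm_triangle_ineq4[of "u - u\<^sub>s" "w - u\<^sub>s"] r1 r2 by simp
    have "V x \<le> L/2 * (norm (u - u\<^sub>s))\<^sup>2 + c * (norm (u - w))\<^sup>2"
      using p_up[of u] unfolding V_def x by simp
    also have "\<dots> \<le> L/2 * r\<^sup>2 + c * (2 * r)\<^sup>2"
      using r1 r3 Lpos cpos by (intro add_mono mult_left_mono power_mono) auto
    finally show ?thesis unfolding \<kappa>2_def r_def[symmetric] by (simp add: algebra_simps power2_eq_square)
  qed
  define a where "a v = \<epsilon> * min ((\<mu>2 (v/2))\<^sup>2) (v / (2*c))" for v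
  have a0: "a 0 = 0" unfolding a_def using m2K unfolding class_K_def by simp
  have anneg: "0 \<le> a s" if "0 \<le> s" for s
    unfolding a_def using eps cpos that by (simp add: K_nonneg[OF m2K])
  have amono: "a s \<le> a t" if "0 \<le> s" "s \<le> t" for s t
  proof -
    have "\<mu>2 (s/2) \<le> \<mu>2 (t/2)" using K_mono[OF m2K] that by simp
    then have "(\<mu>2 (s/2))\<^sup>2 \<le> (\<mu>2 (t/2))\<^sup>2" using K_nonneg[OF m2K, of "s/2"] that by (intro power_mono) auto
    moreover have "s / (2*c) \<le> t / (2*c)" using that cpos by (simp add: divide_right_mono)
    ultimately show ?thesis unfolding a_def using eps by (intro mult_left_mono) auto
  qed
  have apos: "0 < a s" if "0 < s" for s
  proof -
    have "0 < \<mu>2 (s/2)" using K_less[OF m2K, of 0 "s/2"] that m2K unfolding class_K_def by simp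
    then show ?thesis unfolding a_def using eps cpos that by simp
  qed
  have adec: "a (V x) \<le> \<epsilon> * ((norm (g (fst x)))\<^sup>2 + (norm (fst x - snd x))\<^sup>2)" for x
  proof -
    define v where "v = V x"
    have "min ((\<mu>2 (v/2))\<^sup>2) (v / (2*c)) \<le> (norm (g (fst x)))\<^sup>2 + (norm (fst x - snd x))\<^sup>2"
    proof (cases "v/2 \<le> p (fst x)")
      case True
      have "\<mu>2 (v/2) \<le> \<mu>2 (p (fst x))" using K_mono[OF m2K] True V_nn unfolding v_def by simp
      also have "\<dots> \<le> norm (g (fst x))" using mu2b unfolding p_def by simp
      finally have "(\<mu>2 (v/2))\<^sup>2 \<le> (norm (g (fst x)))\<^sup>2"
        using K_nonneg[OF m2K, of "v/2"] V_nn unfolding v_def by (intro power_mono) auto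
      then have "(\<mu>2 (v/2))\<^sup>2 \<le> (norm (g (fst x)))\<^sup>2 + (norm (fst x - snd x))\<^sup>2"
        using zero_le_power2[of "norm (fst x - snd x)"] by linarith
      then show ?thesis by (simp add: min_le_iff_disj)
    next
      case False
      then have "v / 2 \<le> c * (norm (fst x - snd x))\<^sup>2" unfolding v_def V_def by simp
      then have "v / (2*c) \<le> (norm (fst x - snd x))\<^sup>2" using cpos by (simp add: field_simps)
      then have "v / (2*c) \<le> (norm (g (fst x)))\<^sup>2 + (norm (fst x - snd x))\<^sup>2"
        using zero_le_power2[of "norm (g (fst x))"] by linarith
      then show ?thesis by (simp add: min_le_iff_disj)
    qed
    then show ?thesis unfolding a_def v_def using eps by (intro mult_left_mono) auto
  qed
  obtain f where fK: "class_K f" and fa: "\<And>t. 0 \<le> t \<Longrightarrow> t - a t / 2 \<le> f t"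
    and fle: "\<And>t. 0 \<le> t \<Longrightarrow> f t \<le> t" and flt: "\<And>t. 0 < t \<Longrightarrow> f t < t"
    using decay_fun[of a, OF a0 anneg amono apos] by blast
  have fle': "\<forall>t. 0 \<le> t \<longrightarrow> f t \<le> t" using fle by blast
  have flt': "\<forall>t. 0 < t \<longrightarrow> f t < t" using flt by blast
  note it = iter_props[OF fK fle' flt']
  define K where "K = sqrt (2*C/\<epsilon>)"
  define M where "M = 4*c*C/\<epsilon>"
  define q where "q s = 2 * h2 (K * s) + (M + C) * s\<^sup>2" for s
  have Knn: "0 \<le> K" unfolding K_def using eps Cnn by simp
  have Mnn: "0 \<le> M" unfolding M_def using eps Cnn cpos by simp
  have q0: "q 0 = 0" unfolding q_def using h2K unfolding class_K_def by simp
  have qnn: "0 \<le> q s" if "0 \<le> s" for s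
    unfolding q_def using K_nonneg[OF h2K] Knn that Mnn Cnn by simp
  have qmono: "q s \<le> q t" if "0 \<le> s" "s \<le> t" for s t
  proof -
    have "h2 (K * s) \<le> h2 (K * t)" using K_mono[OF h2K] Knn that by (simp add: mult_left_mono)
    moreover have "s\<^sup>2 \<le> t\<^sup>2" using that by (intro power_mono) auto
    ultimately show ?thesis unfolding q_def using Mnn Cnn by (intro add_mono mult_left_mono) auto
  qed
  have qcont: "continuous_on {0..} q"
  proof -
    have "continuous_on {0..} (\<lambda>s. h2 (K * s))"
      using h2K Knn unfolding class_K_def
      by (intro continuous_on_compose2[of "{0..}" h2 "{0..}" "\<lambda>s. K * s"]) (auto intro!: continuous_intros)
    then show ?thesis unfolding q_def by (intro continuous_intros)
  qed
  have Ksq: "K\<^sup>2 = 2*C/\<epsilon>" unfolding K_def using eps Cnn by simp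
  have small: "v \<le> 2 * h2 (K * s) + M * s\<^sup>2" if v: "0 \<le> v" and s: "0 \<le> s" and lt: "a v < 2 * C * s\<^sup>2" for v s
  proof -
    define m where "m = min ((\<mu>2 (v/2))\<^sup>2) (v / (2*c))"
    have "m * \<epsilon> < 2 * C * s\<^sup>2" using lt unfolding a_def m_def by (simp add: mult.commute)
    then have lt': "m < 2 * C * s\<^sup>2 / \<epsilon>" using eps by (simp add: pos_less_divide_eq)
    have h2nn: "0 \<le> h2 (K * s)" using K_nonneg[OF h2K] Knn s by simp
    show ?thesis
    proof (cases "(\<mu>2 (v/2))\<^sup>2 \<le> v / (2*c)")
      case True
      then have "m = (\<mu>2 (v/2))\<^sup>2" unfolding m_def by simp
      moreover have "2 * C * s\<^sup>2 / \<epsilon> = (K * s)\<^sup>2" unfolding power_mult_distrib Ksq by simp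
      ultimately have "(\<mu>2 (v/2))\<^sup>2 < (K * s)\<^sup>2" using lt' by simp
      moreover have "0 \<le> K * s" using Knn s by simp
      ultimately have lt2: "\<mu>2 (v/2) < K * s" by (rule power2_less_imp_less)
      have Ks: "0 \<le> K * s" using Knn s by simp
      have "v/2 < h2 (K * s)"
      proof (rule ccontr)
        assume "\<not> v/2 < h2 (K * s)"
        then have "\<mu>2 (h2 (K * s)) \<le> \<mu>2 (v/2)" using K_mono[OF m2K h2nn] by simp
        then show False using h2f[OF Ks] lt2 by simp
      qed
      moreover have "0 \<le> M * s\<^sup>2" using Mnn by simp
      ultimately show ?thesis by linarith
    next
      case False
      then have "m = v / (2*c)" unfolding m_def by (simp add: min_def)
      then have "v / (2*c) < 2 * C * s\<^sup>2 / \<epsilon>" using lt' by simp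
      then have "v / (2*c) * (2*c) < 2 * C * s\<^sup>2 / \<epsilon> * (2*c)"
        using cpos by (intro mult_strict_right_mono) auto
      moreover have "v / (2*c) * (2*c) = v" using cpos by simp
      moreover have "2 * C * s\<^sup>2 / \<epsilon> * (2*c) = M * s\<^sup>2"
        unfolding M_def by (simp add: divide_simps)
      ultimately have "v < M * s\<^sup>2" by simp
      then show ?thesis using h2nn by linarith
    qed
  qed
  define \<beta> where "\<beta> r s = \<kappa>1 ((f ^^ nat \<lfloor>s\<rfloor>) (\<kappa>2 r))" for r s :: real
  define \<alpha> where "\<alpha> s = \<kappa>1 (q s) + s" for s
  have betaKL: "class_KL \<beta>"
    unfolding class_KL_def
  proof (intro conjI allI impI)
    fix s :: real assume "0 \<le> s"
    show "class_K (\<lambda>r. \<beta> r s)" unfolding \<beta>_def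
      by (rule K_comp[OF k1K K_comp[OF it(1) k2K]])
  next
    fix r :: real assume r: "0 \<le> r"
    have y: "0 \<le> \<kappa>2 r" using K_nonneg[OF k2K r] .
    show "antimono_on {0..} (\<lambda>s. \<beta> r s)"
    proof (rule monotone_onI)
      fix s t :: real assume "s \<in> {0..}" "t \<in> {0..}" "s \<le> t"
      then have "nat \<lfloor>s\<rfloor> \<le> nat \<lfloor>t\<rfloor>" by (simp add: floor_mono nat_mono)
      then have "(f ^^ nat \<lfloor>t\<rfloor>) (\<kappa>2 r) \<le> (f ^^ nat \<lfloor>s\<rfloor>) (\<kappa>2 r)" using it(2)[OF y] by blast
      then show "\<beta> r t \<le> \<beta> r s" unfolding \<beta>_def
        by (rule K_mono[OF k1K K_nonneg[OF it(1) y]])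
    qed
    have lim: "((\<lambda>s. (f ^^ nat \<lfloor>s\<rfloor>) (\<kappa>2 r)) \<longlongrightarrow> 0) at_top"
      using filterlim_compose[OF it(3)[OF y] filterlim_compose[OF filterlim_nat_sequentially filterlim_floor_sequentially]]
      by (simp add: o_def)
    have "((\<lambda>s. \<kappa>1 ((f ^^ nat \<lfloor>s\<rfloor>) (\<kappa>2 r))) \<longlongrightarrow> \<kappa>1 0) at_top"
      using k1K K_nonneg[OF it(1) y] unfolding class_K_def
      by (intro continuous_on_tendsto_compose[where s="{0..}", OF _ lim]) auto
    then show "((\<lambda>s. \<beta> r s) \<longlongrightarrow> 0) at_top"
      unfolding \<beta>_def using k1K unfolding class_K_def by simp
  qed
  have alphaK: "class_K_inf \<alpha>"
    unfolding \<alpha>_def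
  proof (rule K_inf_plus_id)
    show "continuous_on {0..} (\<lambda>x. \<kappa>1 (q x))"
      using k1K qcont qnn unfolding class_K_def
      by (intro continuous_on_compose2[of "{0..}" \<kappa>1 "{0..}" q]) auto
    show "\<kappa>1 (q 0) = 0" using q0 k1K unfolding class_K_def by simp
    show "\<kappa>1 (q x) \<le> \<kappa>1 (q y)" if "0 \<le> x" "x \<le> y" for x y
      using K_mono[OF k1K qnn[OF that(1)] qmono[OF that]] .
    show "0 \<le> \<kappa>1 (q x)" if "0 \<le> x" for x using K_nonneg[OF k1K qnn[OF that]] .
  qed
  show ?thesis
    unfolding ISS_def
  proof (intro conjI exI[of _ \<beta>] exI[of _ \<alpha>] allI impI)
    show "compact {(u\<^sub>s, u\<^sub>s)}" by simp
    show "class_KL \<beta>" by (rule betaKL)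
    show "class_K_inf \<alpha>" by (rule alphaK)
    fix x :: "nat \<Rightarrow> 'a \<times> 'a" and e :: "nat \<Rightarrow> 'a" and j :: nat
    assume H: "bdd_above (range (\<lambda>k. norm (e k))) \<and> (\<forall>j. x (Suc j) = heavy_ball g \<gamma> \<nu> (x j) (e j))"
    define eb where "eb = (SUP k. norm (e k))"
    have eb: "norm (e k) \<le> eb" for k unfolding eb_def using H by (intro cSUP_upper) auto
    have ebnn: "0 \<le> eb" using eb[of 0] norm_ge_zero[of "e 0"] by linarith
    have step: "V (x (Suc k)) \<le> max (f (V (x k))) (q eb)" for k
    proof -
      define v where "v = V (x k)"
      have v0: "0 \<le> v" unfolding v_def by (rule V_nn)
      have xs: "x (Suc k) = heavy_ball g \<gamma> \<nu> (x k) (e k)" using H by blast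
      have "V (x (Suc k)) \<le> v - a v + C * (norm (e k))\<^sup>2"
        using Vstep[of "x k" "e k"] adec[of "x k"] unfolding v_def xs by linarith
      also have "C * (norm (e k))\<^sup>2 \<le> C * eb\<^sup>2"
        using eb[of k] Cnn by (intro mult_left_mono power_mono) auto
      finally have V1: "V (x (Suc k)) \<le> v - a v + C * eb\<^sup>2" by simp
      show ?thesis
      proof (cases "2 * C * eb\<^sup>2 \<le> a v")
        case True
        then have "V (x (Suc k)) \<le> v - a v / 2" using V1 by linarith
        also have "\<dots> \<le> f v" by (rule fa[OF v0])
        finally show ?thesis unfolding v_def by simp
      next
        case False
        then have "v \<le> 2 * h2 (K * eb) + M * eb\<^sup>2" using small[OF v0 ebnn] by simp
        then have "V (x (Suc k)) \<le> q eb" using V1 anneg[OF v0] unfolding q_def by (simp add: algebra_simps)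
        then show ?thesis unfolding v_def by simp
      qed
    qed
    have iter: "V (x k) \<le> max ((f ^^ k) (V (x 0))) (q eb)" for k
    proof (induction k)
      case 0 show ?case by simp
    next
      case (Suc k)
      have "V (x (Suc k)) \<le> max (f (V (x k))) (q eb)" by (rule step)
      moreover have "f (V (x k)) \<le> f (max ((f ^^ k) (V (x 0))) (q eb))"
        using K_mono[OF fK V_nn Suc.IH] .
      moreover have "f (max ((f ^^ k) (V (x 0))) (q eb)) = max (f ((f ^^ k) (V (x 0)))) (f (q eb))"
      proof (cases "(f ^^ k) (V (x 0)) \<le> q eb")
        case True
        moreover have "f ((f ^^ k) (V (x 0))) \<le> f (q eb)"
          using K_mono[OF fK K_nonneg[OF it(1) V_nn] True] .
        ultimately show ?thesis by (simp add: max_absorb2)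
      next
        case False
        then have F: "q eb \<le> (f ^^ k) (V (x 0))" by simp
        moreover have "f (q eb) \<le> f ((f ^^ k) (V (x 0)))"
          using K_mono[OF fK qnn[OF ebnn] F] .
        ultimately show ?thesis by (simp add: max_absorb1)
      qed
      moreover have "f (q eb) \<le> q eb" by (rule fle[OF qnn[OF ebnn]])
      ultimately show ?case by simp
    qed
    have F0: "0 \<le> (f ^^ j) (V (x 0))" using K_nonneg[OF it(1) V_nn] .
    have "infdist (x j) {(u\<^sub>s, u\<^sub>s)} \<le> \<kappa>1 (V (x j))" by (rule Vlow)
    also have "\<dots> \<le> \<kappa>1 (max ((f ^^ j) (V (x 0))) (q eb))"
      by (rule K_mono[OF k1K V_nn iter])
    also have "\<dots> \<le> \<kappa>1 ((f ^^ j) (V (x 0))) + \<kappa>1 (q eb)"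
      using K_nonneg[OF k1K F0] K_nonneg[OF k1K qnn[OF ebnn]] by (simp add: max_def)
    also have "\<kappa>1 ((f ^^ j) (V (x 0))) \<le> \<beta> (infdist (x 0) {(u\<^sub>s, u\<^sub>s)}) (real j)"
    proof -
      have "(f ^^ j) (V (x 0)) \<le> (f ^^ j) (\<kappa>2 (infdist (x 0) {(u\<^sub>s, u\<^sub>s)}))"
        by (rule K_mono[OF it(1) V_nn Vup])
      then show ?thesis unfolding \<beta>_def by (simp add: K_mono[OF k1K F0])
    qed
    also have "\<kappa>1 (q eb) \<le> \<alpha> eb" unfolding \<alpha>_def using ebnn by simp
    finally show "infdist (x j) {(u\<^sub>s, u\<^sub>s)} \<le> \<beta> (infdist (x 0) {(u\<^sub>s, u\<^sub>s)}) (real j) + \<alpha> (SUP k. norm (e k))"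
      unfolding eb_def by simp
  qed
qed

end
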